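(* Let $n\ge2$, let $\mathbf{q}\in\mathbb{R}^n$ with $\sum_i\mathbf{q}_i=1$ and $\mathbf{q}\neq\mathbf{1}/n$, let $1/n<t<1$, and let $i$ be an index with $\mathbf{q}_i=\min_j\mathbf{q}_j$. Define $\bar{\mathbf{q}}=\frac{\mathbf{1}}{n}+\frac{1}{1-n\mathbf{q}_i}\big(\mathbf{q}-\frac{\mathbf{1}}{n}\big)$. If $\bar{\mathbf{q}}\cdot\bar{\mathbf{q}}<t$, then there exists a maximizer $\mathbf{p}^*$ of $\mathbf{p}\cdot\mathbf{q}$ over $P(t)$ with $\mathbf{p}^*_i=0$.
   Context: $\mathbf{1}\in\mathbb{R}^n$ is the all-ones vector. $P(t)=\{\mathbf{p}\in\mathbb{R}^n:\mathbf{p}\ge0,\ \sum_i\mathbf{p}_i=1,\ \mathbf{p}\cdot\mathbf{p}\le t\}$. *)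

theory Defs
  imports "HOL-Analysis.Analysis"
begin

definition ones :: "real ^ 'n" where
  "ones = (\<chi> j. 1)"

definition Pset :: "real \<Rightarrow> (real ^ 'n) set" where
  "Pset t = {p. (\<forall>j. 0 \<le> p $ j) \<and> (\<Sum>j\<in>UNIV. p $ j) = 1 \<and> p \<bullet> p \<le> t}"

end

theory Submission
  imports Defs
begin

lemma inner_sum_vec: "x \<bullet> y = (\<Sum>j\<in>UNIV. x$j * y$j)" for x y :: "real^'n"
  by (simp add: inner_vec_def)

lemma Pset_compact: "compact (Pset t :: (real^'n) set)"
proof -
  have eq: "Pset t = (\<Inter>j. {p::real^'n. 0 \<le> p$j}) \<inter> {p. (\<Sum>j\<in>UNIV. p $ j) = 1} \<inter> {p. p \<bullet> p \<le> t}"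
    by (auto simp: Pset_def)
  have c1: "closed (\<Inter>j. {p::real^'n. 0 \<le> p$j})"
    by (intro closed_INT ballI closed_Collect_le continuous_on_const continuous_on_component continuous_on_id)
  have c2: "closed {p::real^'n. (\<Sum>j\<in>UNIV. p $ j) = 1}"
    by (intro closed_Collect_eq continuous_on_sum continuous_on_const continuous_on_component continuous_on_id)
  have c3: "closed {p::real^'n. p \<bullet> p \<le> t}"
    by (intro closed_Collect_le continuous_on_inner continuous_on_const continuous_on_id)
  have b: "bounded {p::real^'n. p \<bullet> p \<le> t}"
  proof -
    have "{p::real^'n. p \<bullet> p \<le> t} \<subseteq> cball 0 (max 1 t)"
    proof
      fix p :: "real^'n" assume "p \<in> {p. p \<bullet> p \<le> t}"
      hence h: "norm p ^ 2 \<le> t" by (simp add: power2_norm_eq_inner)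
      have "norm p \<le> max 1 t"
      proof (cases "norm p \<le> 1")
        case False
        hence "1 * norm p \<le> norm p * norm p" by (intro mult_right_mono) auto
        hence "norm p \<le> norm p ^ 2" by (simp add: power2_eq_square)
        thus ?thesis using h by linarith
      qed simp
      thus "p \<in> cball 0 (max 1 t)" by simp
    qed
    thus ?thesis using bounded_subset bounded_cball by blast
  qed
  have k3: "compact {p::real^'n. p \<bullet> p \<le> t}"
    unfolding compact_eq_bounded_closed using b c3 by blast
  show ?thesis unfolding eq
    by (rule closed_Int_compact[OF closed_Int[OF c1 c2] k3])
qed

theorem mainTheorem10:
  fixes q :: "real ^ 'n" and t :: real and i :: 'n
  assumes n2: "CARD('n) \<ge> 2"
    and qsum: "(\<Sum>j\<in>UNIV. q $ j) = 1"
    and qne: "q \<noteq> (1 / real CARD('n)) *\<^sub>R ones"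
    and t_lo: "1 / real CARD('n) < t" and t_hi: "t < 1"
    and imin: "q $ i = (MIN j. q $ j)"
    and qbar: "(let qb = (1 / real CARD('n)) *\<^sub>R ones
                   + (1 / (1 - real CARD('n) * q $ i)) *\<^sub>R (q - (1 / real CARD('n)) *\<^sub>R ones)
               in qb \<bullet> qb) < t"
  shows "\<exists>pstar \<in> Pset t. (\<forall>p \<in> Pset t. p \<bullet> q \<le> pstar \<bullet> q) \<and> pstar $ i = 0"
proof -
  define N where "N = real CARD('n)"
  have Npos: "N > 0" by (simp add: N_def)
  define c where "c = 1 / N"
  have cN: "c * N = 1" using Npos by (simp add: c_def)
  have qmin: "\<And>j. q$i \<le> q$j" using imin by (simp add: Min_le)
  have qic: "q$i < c"
  proof (rule ccontr)
    assume "\<not> q$i < c"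
    hence ge: "\<And>j. q$j - c \<ge> 0" using qmin by (smt (verit))
    have "(\<Sum>j\<in>UNIV. q$j - c) = 1 - N * c"
      using qsum by (simp add: sum_subtractf N_def)
    hence "(\<Sum>j\<in>UNIV. q$j - c) = 0" using cN by (simp add: mult.commute)
    hence "\<forall>j\<in>UNIV. q$j - c = 0" using sum_nonneg_eq_0_iff[of UNIV "\<lambda>j. q$j - c"] ge by simp
    hence "q = c *\<^sub>R ones" by (simp add: vec_eq_iff ones_def)
    thus False using qne by (simp add: c_def N_def)
  qed
  define \<sigma> where "\<sigma> = 1 - N * q$i"
  have spos: "\<sigma> > 0"
  proof -
    have "N * q$i < N * c" using qic Npos by simp
    thus ?thesis using cN by (simp add: \<sigma>_def mult.commute)
  qed
  define qb where "qb = c *\<^sub>R ones + (1/\<sigma>) *\<^sub>R (q - c *\<^sub>R ones)"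
  have qb_comp: "\<And>j. qb$j = c + (q$j - c)/\<sigma>" by (simp add: qb_def ones_def)
  have cs: "c * \<sigma> = c - q$i" using cN by (simp add: \<sigma>_def algebra_simps)
  have q_decomp: "\<And>j. q$j = \<sigma> * qb$j + q$i"
  proof -
    fix j
    have "\<sigma> * (c + (q$j - c)/\<sigma>) = \<sigma>*c + (q$j - c)" using spos by (simp add: field_simps)
    thus "q$j = \<sigma> * qb$j + q$i" using cs by (simp add: qb_comp mult.commute)
  qed
  have qbi: "qb$i = 0" using q_decomp[of i] spos by simp
  have qb_nn: "\<And>j. qb$j \<ge> 0"
  proof -
    fix j
    have "qb$j = (q$j - q$i)/\<sigma>" using q_decomp[of j] spos by (simp add: field_simps)
    thus "qb$j \<ge> 0" using qmin[of j] spos by simp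
  qed
  have qb_sum: "(\<Sum>j\<in>UNIV. qb$j) = 1"
  proof -
    have "(\<Sum>j\<in>UNIV. q$j) = (\<Sum>j\<in>UNIV. \<sigma> * qb$j + q$i)"
      by (rule sum.cong[OF refl], rule q_decomp)
    also have "\<dots> = \<sigma> * (\<Sum>j\<in>UNIV. qb$j) + N * q$i"
      by (simp add: sum.distrib sum_distrib_left N_def)
    finally have "(\<Sum>j\<in>UNIV. q$j) = \<sigma> * (\<Sum>j\<in>UNIV. qb$j) + N * q$i" .
    hence "\<sigma> * (\<Sum>j\<in>UNIV. qb$j) = \<sigma> * 1" using qsum by (simp add: \<sigma>_def algebra_simps)
    thus ?thesis using spos by (simp only: mult_left_cancel)
  qed
  have qb_t: "qb \<bullet> qb < t" using qbar by (simp add: Let_def qb_def c_def \<sigma>_def N_def)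
  have qbP: "qb \<in> Pset t" using qb_t qb_sum qb_nn by (simp add: Pset_def)
  have obj: "\<And>x. (\<Sum>j\<in>UNIV. x$j) = 1 \<Longrightarrow> x \<bullet> q = \<sigma> * (x \<bullet> qb) + q$i"
  proof -
    fix x :: "real^'n" assume xs: "(\<Sum>j\<in>UNIV. x$j) = 1"
    have "x \<bullet> q = (\<Sum>j\<in>UNIV. x$j * (\<sigma> * qb$j + q$i))"
      unfolding inner_sum_vec by (rule sum.cong[OF refl], subst q_decomp, rule refl)
    also have "\<dots> = (\<Sum>j\<in>UNIV. \<sigma> * (x$j * qb$j) + x$j * q$i)"
      by (simp add: algebra_simps)
    also have "\<dots> = \<sigma> * (x \<bullet> qb) + q$i * (\<Sum>j\<in>UNIV. x$j)"
      by (simp add: sum.distrib sum_distrib_left inner_sum_vec mult.commute)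
    finally show "x \<bullet> q = \<sigma> * (x \<bullet> qb) + q$i" using xs by simp
  qed
  have ne: "Pset t \<noteq> ({} :: (real^'n) set)" using qbP by blast
  have co: "continuous_on (Pset t :: (real^'n) set) (\<lambda>x::real^'n. x \<bullet> q)"
    by (rule continuous_on_inner[OF continuous_on_id continuous_on_const])
  obtain p where pP: "p \<in> Pset t" and pmax: "\<forall>y\<in>Pset t. y \<bullet> q \<le> p \<bullet> q"
    using continuous_attains_sup[OF Pset_compact ne co] by blast
  have psum: "(\<Sum>j\<in>UNIV. p$j) = 1" and pnn: "\<And>j. p$j \<ge> 0" and pt: "p \<bullet> p \<le> t"
    using pP by (auto simp: Pset_def)
  have "p$i = 0"
  proof (rule ccontr)
    assume "p$i \<noteq> 0"
    with pnn[of i] have pi: "p$i > 0" by simp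
    define a where "a = p \<bullet> qb"
    define b where "b = qb \<bullet> qb"
    define s where "s = p \<bullet> p"
    have ab: "b \<le> a"
    proof -
      have "qb \<bullet> q \<le> p \<bullet> q" using pmax qbP by blast
      hence "\<sigma> * b \<le> \<sigma> * a" using obj[OF qb_sum] obj[OF psum] by (simp add: a_def b_def)
      thus ?thesis using spos by simp
    qed
    have bpos: "b > 0"
    proof -
      have "qb \<noteq> 0" using qb_sum by auto
      thus ?thesis by (simp add: b_def)
    qed
    have CS: "a^2 \<le> s * b" unfolding a_def s_def b_def by (rule Cauchy_Schwarz_ineq)
    have dpos: "s - 2*a + b > 0"
    proof -
      have "(p - qb) $ i \<noteq> 0" using pi qbi by simp
      hence "p - qb \<noteq> 0" by (metis zero_index)
      hence "(p - qb) \<bullet> (p - qb) > 0" by simp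
      thus ?thesis by (simp add: a_def b_def s_def inner_diff_left inner_diff_right inner_commute)
    qed
    obtain l where l1: "l * a < b" and l2: "l * (s - p$i) > a - p$i"
    proof (cases "a < p$i")
      case True
      show ?thesis by (rule that[of 0]) (use True bpos in auto)
    next
      case False
      have apos: "a > 0" using ab bpos by simp
      have s0: "s \<ge> 0" by (simp add: s_def)
      have "s * b \<le> s * a" by (rule mult_left_mono[OF ab s0])
      hence "a * a \<le> s * a" using CS by (simp add: power2_eq_square)
      hence as: "a \<le> s" using apos by simp
      have sp: "s - p$i > 0"
      proof (rule ccontr)
        assume "\<not> s - p$i > 0"
        hence "a = s" using as False by simp
        thus False using dpos ab by simp
      qed
      have e1: "(a - p$i) * a = a^2 - p$i * a" by (simp add: power2_eq_square algebra_simps)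
      have e2: "b * (s - p$i) = s * b - p$i * b" by (simp add: algebra_simps)
      have key: "(a - p$i) * a < b * (s - p$i)"
      proof (cases "a = b")
        case True
        have "a^2 \<noteq> s * b"
        proof
          assume h: "a^2 = s * b"
          hence "b * b = b * s" using True by (simp add: power2_eq_square mult.commute)
          hence "b = s" using bpos by simp
          thus False using True dpos by simp
        qed
        hence "a^2 < s * b" using CS by simp
        thus ?thesis using e1 e2 True by simp
      next
        case False
        hence "b < a" using ab by simp
        hence "p$i * b < p$i * a" using pi by simp
        thus ?thesis using e1 e2 CS by linarith
      qed
      define L where "L = (a - p$i) / (s - p$i)"
      define U where "U = b / a"
      have LU: "L < U" using key sp apos
        by (simp add: L_def U_def divide_simps mult.commute)
      show ?thesis
      proof (rule that[of "(L+U)/2"])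
        have "(L+U)/2 < U" using LU by simp
        thus "(L+U)/2 * a < b" using apos by (simp add: U_def pos_less_divide_eq)
        have "(L+U)/2 > L" using LU by simp
        thus "(L+U)/2 * (s - p$i) > a - p$i" using sp by (simp add: L_def pos_divide_less_eq)
      qed
    qed
    define v where "v = qb - l *\<^sub>R p - (1 - l) *\<^sub>R axis i (1::real)"
    have v_comp: "\<And>j. v$j = qb$j - l * p$j - (1-l) * (if j = i then 1 else 0)"
      by (simp add: v_def axis_def)
    have vsum: "(\<Sum>j\<in>UNIV. v$j) = 0"
      by (simp add: v_comp sum_subtractf sum_distrib_left[symmetric] qb_sum psum)
    have ax: "axis i (1::real) \<bullet> qb = 0"
      using inner_axis[of qb i 1] qbi by (simp add: inner_commute)
    have vqb: "v \<bullet> qb = b - l * a"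
      by (simp add: v_def inner_diff_left ax a_def b_def)
    have pv: "p \<bullet> v = a - l * s - (1-l) * p$i"
      by (simp add: v_def inner_diff_right inner_axis a_def s_def)
    have pvneg: "p \<bullet> v < 0" using pv l2 by (simp add: algebra_simps)
    have t1: "((\<lambda>e. e * l) \<longlongrightarrow> 0 * l) (at_right (0::real))"
      by (intro tendsto_intros)
    have t2: "((\<lambda>e. p$i * (1 - e * l) - e * (1 - l)) \<longlongrightarrow> p$i * (1 - 0 * l) - 0 * (1 - l)) (at_right (0::real))"
      by (intro tendsto_intros)
    have t3: "((\<lambda>e. 2 * (p \<bullet> v) + e * (v \<bullet> v)) \<longlongrightarrow> 2 * (p \<bullet> v) + 0 * (v \<bullet> v)) (at_right (0::real))"
      by (intro tendsto_intros)
    have e1: "eventually (\<lambda>e. e * l < 1) (at_right (0::real))"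
      using order_tendstoD(2)[OF t1, of 1] by simp
    have e2: "eventually (\<lambda>e. p$i * (1 - e * l) - e * (1 - l) > 0) (at_right (0::real))"
      using order_tendstoD(1)[OF t2, of 0] pi by simp
    have e3: "eventually (\<lambda>e. 2 * (p \<bullet> v) + e * (v \<bullet> v) < 0) (at_right (0::real))"
      using order_tendstoD(2)[OF t3, of 0] pvneg by simp
    have "eventually (\<lambda>e. 0 < e \<and> e * l < 1 \<and> p$i * (1 - e * l) - e * (1 - l) > 0
            \<and> 2 * (p \<bullet> v) + e * (v \<bullet> v) < 0) (at_right (0::real))"
      using eventually_conj[OF eventually_at_right_less eventually_conj[OF e1 eventually_conj[OF e2 e3]]] by simp
    then obtain e :: real where ep: "0 < e" and el: "e * l < 1"
      and ei: "p$i * (1 - e * l) - e * (1 - l) > 0"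
      and eq: "2 * (p \<bullet> v) + e * (v \<bullet> v) < 0"
      using eventually_happens'[OF trivial_limit_at_right_real] by blast
    define w where "w = p + e *\<^sub>R v"
    have wsum: "(\<Sum>j\<in>UNIV. w$j) = 1"
      by (simp add: w_def sum.distrib sum_distrib_left[symmetric] psum vsum)
    have wnn: "\<And>j. w$j \<ge> 0"
    proof -
      fix j
      show "w$j \<ge> 0"
      proof (cases "j = i")
        case True
        have "w$j = p$i * (1 - e * l) - e * (1 - l)"
          using True qbi by (simp add: w_def v_comp algebra_simps)
        thus ?thesis using ei by simp
      next
        case False
        have "w$j = p$j * (1 - e * l) + e * qb$j"
          using False by (simp add: w_def v_comp algebra_simps)
        moreover have "p$j * (1 - e * l) \<ge> 0" using pnn[of j] el by simp
        moreover have "e * qb$j \<ge> 0" using ep qb_nn[of j] by simp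
        ultimately show ?thesis by simp
      qed
    qed
    have ww: "w \<bullet> w = s + e * (2 * (p \<bullet> v) + e * (v \<bullet> v))"
      by (simp add: w_def s_def inner_add_left inner_add_right inner_commute algebra_simps)
    have "e * (2 * (p \<bullet> v) + e * (v \<bullet> v)) < 0" using ep eq by (simp add: mult_pos_neg)
    hence wt: "w \<bullet> w \<le> t" using ww pt s_def by simp
    have wP: "w \<in> Pset t" using wsum wnn wt by (simp add: Pset_def)
    have wqb: "w \<bullet> qb = a + e * (b - l * a)"
      by (simp add: w_def inner_add_left vqb a_def)
    have "w \<bullet> qb > a" using wqb ep l1 by simp
    hence "w \<bullet> q > p \<bullet> q" using obj[OF wsum] obj[OF psum] spos a_def by simp
    thus False using pmax wP by force
  qed
  thus ?thesis using pP pmax by blast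
qed

end
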